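(* If a graph $G$ has at most $a$ vertices of degree greater than $D$, then $G$ has clique-based $\infty$-admissibility at most $a+D$.
   Context: All graphs are finite and simple. Given an ordering $v_1,\ldots,v_n$ of $V(G)$, the $\infty$-backconnectivity of $v_k$ is the maximum number of paths (of any length) from $v_k$ to $\{v_1,\ldots,v_{k-1}\}$ that pairwise intersect only in $v_k$; the $\infty$-admissibility of the ordering is the maximum $\infty$-backconnectivity over its vertices. For $X\subseteq V(G)$, $G$ has $X$-based $\infty$-admissibility at most $t$ if there is an ordering $v_1,\ldots,v_n$ of $V(G)$ with $\infty$-admissibility at most $t$ and $X=\{v_1,\ldots,v_{|X|}\}$. $G$ has clique-based $\infty$-admissibility at most $t$ if it has $X$-based $\infty$-admissibility at most $t$ for every $X\subseteq V(G)$ inducing a clique in $G$. *)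

theory Defs
  imports Main
begin

definition simple_graph :: "'a set \<Rightarrow> ('a \<Rightarrow> 'a \<Rightarrow> bool) \<Rightarrow> bool" where
  "simple_graph V E \<longleftrightarrow> finite V \<and> (\<forall>u v. E u v \<longrightarrow> E v u)
     \<and> (\<forall>v. \<not> E v v) \<and> (\<forall>u v. E u v \<longrightarrow> u \<in> V \<and> v \<in> V)"

definition degree :: "'a set \<Rightarrow> ('a \<Rightarrow> 'a \<Rightarrow> bool) \<Rightarrow> 'a \<Rightarrow> nat" where
  "degree V E v = card {u \<in> V. E v u}"

definition is_path :: "'a set \<Rightarrow> ('a \<Rightarrow> 'a \<Rightarrow> bool) \<Rightarrow> 'a list \<Rightarrow> bool" where
  "is_path V E p \<longleftrightarrow> p \<noteq> [] \<and> distinct p \<and> set p \<subseteq> V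
     \<and> (\<forall>i. Suc i < length p \<longrightarrow> E (p ! i) (p ! Suc i))"

definition path_to :: "'a set \<Rightarrow> ('a \<Rightarrow> 'a \<Rightarrow> bool) \<Rightarrow> 'a \<Rightarrow> 'a set \<Rightarrow> 'a list \<Rightarrow> bool" where
  "path_to V E v S p \<longleftrightarrow> is_path V E p \<and> hd p = v \<and> last p \<in> S"

definition fan :: "'a set \<Rightarrow> ('a \<Rightarrow> 'a \<Rightarrow> bool) \<Rightarrow> 'a \<Rightarrow> 'a set \<Rightarrow> 'a list set \<Rightarrow> bool" where
  "fan V E v S P \<longleftrightarrow> (\<forall>p\<in>P. path_to V E v S p)
     \<and> (\<forall>p\<in>P. \<forall>q\<in>P. p \<noteq> q \<longrightarrow> set p \<inter> set q = {v})"

text \<open>The infinity-backconnectivity of the k-th vertex (0-indexed) of the ordering vs.\<close>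
definition backconn :: "'a set \<Rightarrow> ('a \<Rightarrow> 'a \<Rightarrow> bool) \<Rightarrow> 'a list \<Rightarrow> nat \<Rightarrow> nat" where
  "backconn V E vs k = Max {card P | P. fan V E (vs ! k) (set (take k vs)) P}"

definition is_ordering :: "'a set \<Rightarrow> 'a list \<Rightarrow> bool" where
  "is_ordering V vs \<longleftrightarrow> distinct vs \<and> set vs = V"

definition adm_le :: "'a set \<Rightarrow> ('a \<Rightarrow> 'a \<Rightarrow> bool) \<Rightarrow> 'a list \<Rightarrow> nat \<Rightarrow> bool" where
  "adm_le V E vs t \<longleftrightarrow> (\<forall>k < length vs. backconn V E vs k \<le> t)"

definition X_based_adm_le :: "'a set \<Rightarrow> ('a \<Rightarrow> 'a \<Rightarrow> bool) \<Rightarrow> 'a set \<Rightarrow> nat \<Rightarrow> bool" where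
  "X_based_adm_le V E X t \<longleftrightarrow>
     (\<exists>vs. is_ordering V vs \<and> adm_le V E vs t \<and> X = set (take (card X) vs))"

definition is_clique :: "'a set \<Rightarrow> ('a \<Rightarrow> 'a \<Rightarrow> bool) \<Rightarrow> 'a set \<Rightarrow> bool" where
  "is_clique V E X \<longleftrightarrow> X \<subseteq> V \<and> (\<forall>u\<in>X. \<forall>v\<in>X. u \<noteq> v \<longrightarrow> E u v)"

definition clique_based_adm_le :: "'a set \<Rightarrow> ('a \<Rightarrow> 'a \<Rightarrow> bool) \<Rightarrow> nat \<Rightarrow> bool" where
  "clique_based_adm_le V E t \<longleftrightarrow> (\<forall>X. is_clique V E X \<longrightarrow> X_based_adm_le V E X t)"

end

theory Submission
  imports Defs
begin

lemma fan_card_le_S: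
  assumes "fan V E v S P" "v \<notin> S" "finite S"
  shows "card P \<le> card S"
proof -
  have "inj_on last P"
  proof (rule inj_onI)
    fix p q assume pq: "p \<in> P" "q \<in> P" "last p = last q"
    show "p = q"
    proof (rule ccontr)
      assume "p \<noteq> q"
      hence "set p \<inter> set q = {v}" using assms(1) pq unfolding fan_def by blast
      moreover have "p \<noteq> []" "q \<noteq> []" using assms(1) pq unfolding fan_def path_to_def is_path_def by auto
      ultimately have "last p = v" using pq(3) by (metis IntI last_in_set singletonD)
      moreover have "last p \<in> S" using assms(1) pq unfolding fan_def path_to_def by auto
      ultimately show False using assms(2) by simp
    qed
  qed
  moreover have "last ` P \<subseteq> S" using assms(1) unfolding fan_def path_to_def by auto
  ultimately show ?thesis using card_inj_on_le assms(3) by blast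
qed

lemma fan_card_le_deg:
  assumes "fan V E v S P" "v \<notin> S" "finite V"
  shows "card P \<le> degree V E v"
proof -
  have len: "Suc 0 < length p" if "p \<in> P" for p
  proof -
    have "is_path V E p" "hd p = v" "last p \<in> S" using assms(1) that
      unfolding fan_def path_to_def by auto
    hence "p \<noteq> []" unfolding is_path_def by auto
    show ?thesis
    proof (rule ccontr)
      assume "\<not> Suc 0 < length p"
      with \<open>p \<noteq> []\<close> have "length p = 1" by (cases p) auto
      hence "last p = hd p" by (cases p) auto
      with \<open>hd p = v\<close> \<open>last p \<in> S\<close> assms(2) show False by simp
    qed
  qed
  have mem: "p ! 1 \<in> {u \<in> V. E v u}" if "p \<in> P" for p
  proof -
    have ip: "is_path V E p" "hd p = v" using assms(1) that
      unfolding fan_def path_to_def by auto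
    have l: "Suc 0 < length p" using len that .
    hence "p ! 0 = v" using ip(2) by (cases p) auto
    moreover have "E (p ! 0) (p ! Suc 0)" using ip(1) l unfolding is_path_def by blast
    moreover have "p ! 1 \<in> V" using ip(1) l unfolding is_path_def by (metis One_nat_def Suc_lessD nth_mem subsetD l)
    ultimately show ?thesis by simp
  qed
  have "inj_on (\<lambda>p. p ! 1) P"
  proof (rule inj_onI)
    fix p q assume pq: "p \<in> P" "q \<in> P" "p ! 1 = q ! 1"
    show "p = q"
    proof (rule ccontr)
      assume "p \<noteq> q"
      hence "set p \<inter> set q = {v}" using assms(1) pq unfolding fan_def by blast
      moreover have "p ! 1 \<in> set p" "q ! 1 \<in> set q" using len pq by (metis One_nat_def nth_mem)+
      ultimately have "p ! 1 = v" using pq(3) by auto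
      moreover have ip: "is_path V E p" "hd p = v" using assms(1) pq
        unfolding fan_def path_to_def by auto
      moreover have "Suc 0 < length p" using len pq by auto
      ultimately have "p ! 1 = p ! 0" by (cases p) auto
      moreover have "distinct p" using ip unfolding is_path_def by auto
      ultimately show False using \<open>Suc 0 < length p\<close> nth_eq_iff_index_eq[of p "Suc 0" 0] by force
    qed
  qed
  moreover have "finite {u \<in> V. E v u}" using assms(3) by simp
  ultimately show ?thesis unfolding degree_def using mem card_inj_on_le
    by (metis (no_types, lifting) image_subsetI)
qed

lemma backconn_le:
  assumes "\<And>P. fan V E (vs ! k) (set (take k vs)) P \<Longrightarrow> card P \<le> t"
  shows "backconn V E vs k \<le> t"
proof -
  let ?A = "{card P | P. fan V E (vs ! k) (set (take k vs)) P}"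
  have "fan V E (vs ! k) (set (take k vs)) {}" unfolding fan_def by simp
  hence ne: "?A \<noteq> {}" by blast
  have bd: "\<forall>x\<in>?A. x \<le> t" using assms by blast
  hence "finite ?A" using finite_nat_set_iff_bounded_le by blast
  thus ?thesis unfolding backconn_def using ne bd by simp
qed

lemma nth_notin_take:
  assumes "distinct xs" "k < length xs"
  shows "xs ! k \<notin> set (take k xs)"
proof
  assume "xs ! k \<in> set (take k xs)"
  then obtain i where "i < length (take k xs)" "take k xs ! i = xs ! k"
    by (auto simp: in_set_conv_nth)
  hence "i < k" "xs ! i = xs ! k" by auto
  thus False using assms by (simp add: nth_eq_iff_index_eq)
qed

theorem lemma24:
  fixes V :: "'a set" and E :: "'a \<Rightarrow> 'a \<Rightarrow> bool" and a D :: nat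
  assumes "simple_graph V E"
    and "card {v \<in> V. degree V E v > D} \<le> a"
  shows "clique_based_adm_le V E (a + D)"
  unfolding clique_based_adm_le_def
proof (intro allI impI)
  fix X assume cl: "is_clique V E X"
  have fV: "finite V" using assms(1) unfolding simple_graph_def by auto
  define H where "H = {v \<in> V. degree V E v > D}"
  have fH: "finite H" using fV unfolding H_def by simp
  have XV: "X \<subseteq> V" using cl unfolding is_clique_def by auto
  have fX: "finite X" using XV fV finite_subset by blast
  obtain xs where xs: "set xs = X" "distinct xs" using finite_distinct_list[OF fX] by blast
  obtain hs where hs: "set hs = H - X" "distinct hs" using finite_distinct_list[of "H - X"] fH by blast
  obtain ls where ls: "set ls = V - X - H" "distinct ls" using finite_distinct_list[of "V - X - H"] fV by blast
  define vs where "vs = (xs @ hs) @ ls"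
  have ord: "is_ordering V vs" unfolding is_ordering_def vs_def
    using xs hs ls XV H_def by auto
  have cX: "card X = length xs" using xs distinct_card by metis
  have tX: "X = set (take (card X) vs)" unfolding vs_def cX using xs by simp
  have XL: "card (X - H) \<le> D + 1"
  proof (cases "X - H = {}")
    case True hence "card (X - H) = 0" by (simp only: card.empty)
    thus ?thesis by simp
  next
    case False
    then obtain w where w: "w \<in> X" "w \<notin> H" by blast
    hence "degree V E w \<le> D" using XV unfolding H_def by auto
    moreover have "X - {w} \<subseteq> {u \<in> V. E w u}" using cl w unfolding is_clique_def by auto
    hence "card (X - {w}) \<le> degree V E w" unfolding degree_def using fV
      by (simp add: card_mono)
    moreover have "card (X - {w}) = card X - 1" using w fX by simp
    moreover have "card (X - H) \<le> card X" using fX by (simp add: card_mono)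
    ultimately show ?thesis by linarith
  qed
  have "adm_le V E vs (a + D)"
    unfolding adm_le_def
  proof (intro allI impI)
    fix k assume k: "k < length vs"
    have dvs: "distinct vs" using ord unfolding is_ordering_def by auto
    let ?v = "vs ! k"
    let ?S = "set (take k vs)"
    have vS: "?v \<notin> ?S" using nth_notin_take[OF dvs k] .
    have vV: "?v \<in> V" using ord k unfolding is_ordering_def by (metis nth_mem)
    show "backconn V E vs k \<le> a + D"
    proof (rule backconn_le)
      fix P assume fan: "fan V E ?v ?S P"
      show "card P \<le> a + D"
      proof (cases "?v \<in> H")
        case False
        hence "degree V E ?v \<le> D" using vV unfolding H_def by auto
        thus ?thesis using fan_card_le_deg[OF fan vS fV] by simp
      next
        case True
        have km: "k < length (xs @ hs)"
        proof (rule ccontr)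
          assume nk: "\<not> ?thesis"
          hence "?v = ls ! (k - length (xs @ hs))" unfolding vs_def
            by (metis nth_append not_less)
          moreover have "k - length (xs @ hs) < length ls" using k nk unfolding vs_def by simp
          ultimately have "?v \<in> set ls" by simp
          thus False using True ls by auto
        qed
        have "?S \<subseteq> set (xs @ hs)" unfolding vs_def using km
          by (metis less_imp_le_nat set_take_subset take_append take_eq_Nil2 append_Nil2 diff_is_0_eq)
        hence "?S \<subseteq> (X - H) \<union> (H - {?v})" using vS xs hs by auto
        hence "card ?S \<le> card ((X - H) \<union> (H - {?v}))"
          using fX fH by (intro card_mono) auto
        also have "\<dots> \<le> card (X - H) + card (H - {?v})" by (rule card_Un_le)
        also have "card (H - {?v}) = card H - 1" using True fH by simp
        finally have cS: "card ?S \<le> card (X - H) + (card H - 1)" .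
        have "card H \<le> a" using assms(2) unfolding H_def .
        moreover have "card H \<ge> 1" using True fH by (metis One_nat_def card_0_eq empty_iff less_one not_le)
        ultimately have "card ?S \<le> a + D" using cS XL by linarith
        thus ?thesis using fan_card_le_S[OF fan vS] by (meson finite_set le_trans)
      qed
    qed
  qed
  thus "X_based_adm_le V E X (a + D)" unfolding X_based_adm_le_def using ord tX by blast
qed

end
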